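(* Let $n\ge1$, $1\le q,q_1,q_2\le\infty$ and $s,s_1,s_2\in\mathbb{R}$. If $L(q_1,s_1)\ast L(q_2,s_2)\subset L(q,s)$, then $l(q_1,s_1)\ast l(q_2,s_2)\subset l(q,s)$.
   Context: $\langle x\rangle=(1+|x|^2)^{1/2}$. For $1\le p\le\infty$, $s\in\mathbb{R}$: $L(p,s)$ is the space of measurable $f$ on $\mathbb{R}^n$ with $\|f\|_{L(p,s)}=\big(\int|f(x)|^p\langle x\rangle^{ps}dx\big)^{1/p}<\infty$ (ess sup of $|f(x)|\langle x\rangle^s$ if $p=\infty$); $l(p,s)$ is the space of $a:\mathbb{Z}^n\to\mathbb{C}$ with $\|a\|_{l(p,s)}=\big(\sum_k|a(k)|^p\langle k\rangle^{ps}\big)^{1/p}<\infty$ (sup of $|a(k)|\langle k\rangle^s$ if $p=\infty$). Convolutions: $(f\ast g)(x)=\int f(x-y)g(y)dy$ on $\mathbb{R}^n$ and $(a\ast b)(k)=\sum_j a(k-j)b(j)$ on $\mathbb{Z}^n$. "$X\ast Y\subset Z$" means there is $C$ with $f\ast g\in Z$ and $\|f\ast g\|_Z\le C\|f\|_X\|g\|_Y$ for all $f\in X$, $g\in Y$. *)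

theory Defs
  imports "HOL-Analysis.Analysis"
begin

definition jb :: "real^'n \<Rightarrow> real" where
  "jb x = sqrt (1 + (norm x)^2)"

definition jbZ :: "int^'n \<Rightarrow> real" where
  "jbZ k = jb (\<chi> i. real_of_int (k $ i))"

text \<open>Exponents p in [1,infinity] are represented as ennreal values.\<close>

definition inL :: "ennreal \<Rightarrow> real \<Rightarrow> (real^'n \<Rightarrow> complex) \<Rightarrow> bool" where
  "inL p s f \<longleftrightarrow> f \<in> borel_measurable lebesgue \<and>
     (if p = \<infinity> then (\<exists>C. AE x in lebesgue. cmod (f x) * jb x powr s \<le> C)
      else (\<integral>\<^sup>+ x. ennreal (cmod (f x) powr enn2real p * jb x powr (enn2real p * s)) \<partial>lebesgue) < \<infinity>)"

definition normL :: "ennreal \<Rightarrow> real \<Rightarrow> (real^'n \<Rightarrow> complex) \<Rightarrow> real" where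
  "normL p s f =
     (if p = \<infinity> then Inf {C. AE x in lebesgue. cmod (f x) * jb x powr s \<le> C}
      else enn2real (\<integral>\<^sup>+ x. ennreal (cmod (f x) powr enn2real p * jb x powr (enn2real p * s)) \<partial>lebesgue)
             powr (1 / enn2real p))"

definition inl :: "ennreal \<Rightarrow> real \<Rightarrow> (int^'n \<Rightarrow> complex) \<Rightarrow> bool" where
  "inl p s a \<longleftrightarrow>
     (if p = \<infinity> then bdd_above (range (\<lambda>k. cmod (a k) * jbZ k powr s))
      else (\<lambda>k. cmod (a k) powr enn2real p * jbZ k powr (enn2real p * s)) summable_on UNIV)"

definition norml :: "ennreal \<Rightarrow> real \<Rightarrow> (int^'n \<Rightarrow> complex) \<Rightarrow> real" where
  "norml p s a =
     (if p = \<infinity> then (SUP k. cmod (a k) * jbZ k powr s)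
      else (\<Sum>\<^sub>\<infinity>k. cmod (a k) powr enn2real p * jbZ k powr (enn2real p * s)) powr (1 / enn2real p))"

definition convR :: "(real^'n \<Rightarrow> complex) \<Rightarrow> (real^'n \<Rightarrow> complex) \<Rightarrow> real^'n \<Rightarrow> complex" where
  "convR f g x = (\<integral> y. f (x - y) * g y \<partial>lebesgue)"

definition convZ :: "(int^'n \<Rightarrow> complex) \<Rightarrow> (int^'n \<Rightarrow> complex) \<Rightarrow> int^'n \<Rightarrow> complex" where
  "convZ a b k = (\<Sum>\<^sub>\<infinity>j. a (k - j) * b j)"

definition L_conv_incl :: "'n::finite itself \<Rightarrow> ennreal \<Rightarrow> real \<Rightarrow> ennreal \<Rightarrow> real \<Rightarrow> ennreal \<Rightarrow> real \<Rightarrow> bool" where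
  "L_conv_incl _ p1 s1 p2 s2 q s \<longleftrightarrow>
     (\<exists>C. \<forall>(f::real^'n \<Rightarrow> complex) g. inL p1 s1 f \<longrightarrow> inL p2 s2 g \<longrightarrow>
        (AE x in lebesgue. integrable lebesgue (\<lambda>y. f (x - y) * g y)) \<and>
        inL q s (convR f g) \<and>
        normL q s (convR f g) \<le> C * normL p1 s1 f * normL p2 s2 g)"

definition l_conv_incl :: "'n::finite itself \<Rightarrow> ennreal \<Rightarrow> real \<Rightarrow> ennreal \<Rightarrow> real \<Rightarrow> ennreal \<Rightarrow> real \<Rightarrow> bool" where
  "l_conv_incl _ p1 s1 p2 s2 q s \<longleftrightarrow>
     (\<exists>C. \<forall>(a::int^'n \<Rightarrow> complex) b. inl p1 s1 a \<longrightarrow> inl p2 s2 b \<longrightarrow>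
        (\<forall>k. (\<lambda>j. a (k - j) * b j) summable_on UNIV) \<and>
        inl q s (convZ a b) \<and>
        norml q s (convZ a b) \<le> C * norml p1 s1 a * norml p2 s2 b)"

end

theory Submission
  imports Defs
begin


definition fl :: "real^'n \<Rightarrow> int^'n" where "fl x = (\<chi> i. \<lfloor>x $ i\<rfloor>)"
definition rv :: "int^'n \<Rightarrow> real^'n" where "rv k = (\<chi> i. real_of_int (k $ i))"

lemma fl_eq_iff: "fl x = k \<longleftrightarrow> (\<forall>i. real_of_int (k$i) \<le> x$i \<and> x$i < real_of_int (k$i) + 1)"
  unfolding fl_def by (auto simp: vec_eq_iff floor_eq_iff)

lemma fl_meas: "fl \<in> borel \<rightarrow>\<^sub>M count_space UNIV"
proof (subst measurable_count_space_eq2_countable, safe)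
  fix k :: "int^'n"
  have "fl -` {k} = {x. fl x = k}" by auto
  also have "\<dots> = {x. \<forall>i. real_of_int (k$i) \<le> x$i \<and> x$i < real_of_int (k$i) + 1}"
    by (simp only: fl_eq_iff)
  also have "\<dots> \<in> sets borel" by measurable
  finally show "fl -` {k} \<inter> space borel \<in> sets borel" by simp
qed auto

lemma fl_sets: "fl -` {k} \<in> sets borel"
  using measurable_sets[OF fl_meas, of "{k}"] by simp

lemma frac_comp: "0 \<le> (x - rv (fl x)) $ i" "(x - rv (fl x)) $ i < 1"
  by (auto simp: fl_def rv_def) linarith

lemma norm_frac: "norm (x - rv (fl x)) \<le> real CARD('n)" for x :: "real^'n"
proof -
  have "norm (x - rv (fl x)) \<le> (\<Sum>i\<in>UNIV. \<bar>(x - rv (fl x)) $ i\<bar>)" by (rule norm_le_l1_cart)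
  also have "\<dots> \<le> (\<Sum>i\<in>(UNIV::'n set). 1)"
  proof (rule sum_mono)
    fix i have "0 \<le> (x - rv (fl x)) $ i" "(x - rv (fl x)) $ i < 1" by (rule frac_comp)+
    then show "\<bar>(x - rv (fl x)) $ i\<bar> \<le> 1" by linarith
  qed
  finally show ?thesis by simp
qed

lemma jb_ge1: "1 \<le> jb x" unfolding jb_def by simp
lemma jb_pos: "0 < jb x" using jb_ge1[of x] by linarith
lemma jb_ge_norm: "norm x \<le> jb x" unfolding jb_def by (simp add: real_le_rsqrt)

lemma sqrt_aux: assumes "0 \<le> a" "0 \<le> d" shows "sqrt (1 + (a+d)^2) \<le> sqrt (1 + a^2) + d"
proof (rule real_le_lsqrt)
  have "a \<le> sqrt (1 + a^2)" by (simp add: real_le_rsqrt)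
  then have "a * d \<le> sqrt (1 + a^2) * d" using assms by (simp add: mult_right_mono)
  then show "1 + (a + d)\<^sup>2 \<le> (sqrt (1 + a\<^sup>2) + d)\<^sup>2"
    by (simp add: power2_eq_square algebra_simps)
qed (use assms in auto)

lemma jb_le_add: "jb x \<le> jb y + norm (x - y)"
proof -
  have "norm x \<le> norm y + norm (x - y)" by (metis add.commute diff_add_cancel norm_triangle_ineq)
  then have "jb x \<le> sqrt (1 + (norm y + norm (x-y))^2)" unfolding jb_def
    by (simp add: power_mono)
  also have "\<dots> \<le> jb y + norm (x - y)" unfolding jb_def by (rule sqrt_aux) auto
  finally show ?thesis .
qed

lemma jb_le_mult: assumes "norm (x - y) \<le> d" shows "jb x \<le> (1 + d) * jb y"
proof -
  have "jb x \<le> jb y + d" using jb_le_add[of x y] assms by linarith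
  also have "\<dots> \<le> jb y + d * jb y" using jb_ge1[of y] assms norm_ge_zero[of "x-y"]
    mult_left_mono[of 1 "jb y" d] by (smt (verit) mult.commute mult_cancel_left1)
  finally show ?thesis by (simp add: algebra_simps)
qed

lemma jb_powr_le: assumes "norm (x - y) \<le> d" shows "jb x powr t \<le> (1 + d) powr \<bar>t\<bar> * jb y powr t"
proof -
  have d0: "0 \<le> d" using assms norm_ge_zero[of "x-y"] by linarith
  show ?thesis
  proof (cases "0 \<le> t")
    case True
    have "jb x powr t \<le> ((1 + d) * jb y) powr t"
      by (rule powr_mono2) (use True jb_pos[of x] jb_le_mult[OF assms] in auto)
    also have "\<dots> = (1 + d) powr \<bar>t\<bar> * jb y powr t" using True d0 jb_pos[of y] by (simp add: powr_mult)
    finally show ?thesis .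
  next
    case False
    have "norm (y - x) \<le> d" using assms by (simp add: norm_minus_commute)
    from jb_le_mult[OF this] have "jb y / (1 + d) \<le> jb x" using d0 by (simp add: field_simps)
    then have "jb x powr t \<le> (jb y / (1 + d)) powr t"
      by (intro powr_mono2') (use False jb_pos[of y] d0 in auto)
    also have "\<dots> = (1 + d) powr \<bar>t\<bar> * jb y powr t" using False d0 jb_pos[of y]
      by (simp add: powr_divide powr_minus_divide)
    finally show ?thesis .
  qed
qed

lemma jbZ_fl: "jbZ (fl x) = jb (rv (fl x))" unfolding jbZ_def rv_def by simp

lemma jb_vs_jbZ:
  fixes x :: "real^'n"
  shows "jb x powr t \<le> (1 + real CARD('n)) powr \<bar>t\<bar> * jbZ (fl x) powr t"
    and "jbZ (fl x) powr t \<le> (1 + real CARD('n)) powr \<bar>t\<bar> * jb x powr t"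
proof -
  show "jb x powr t \<le> (1 + real CARD('n)) powr \<bar>t\<bar> * jbZ (fl x) powr t"
    unfolding jbZ_fl by (rule jb_powr_le) (rule norm_frac)
  have "norm (rv (fl x) - x) \<le> real CARD('n)" using norm_frac[of x] by (simp add: norm_minus_commute)
  then show "jbZ (fl x) powr t \<le> (1 + real CARD('n)) powr \<bar>t\<bar> * jb x powr t"
    unfolding jbZ_fl by (rule jb_powr_le)
qed



lemma count_single:
  fixes \<phi> :: "'a \<Rightarrow> ennreal"
  assumes "\<And>k. k \<noteq> k0 \<Longrightarrow> \<phi> k = 0"
  shows "(\<integral>\<^sup>+ k. \<phi> k \<partial>count_space UNIV) = \<phi> k0"
  using nn_integral_count_space'[of "{k0}" UNIV \<phi>] assms by auto

lemma ones_Basis: "b \<in> Basis \<Longrightarrow> (\<chi> i. c) \<bullet> b = (c::real)"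
  by (auto simp: Basis_vec_def inner_axis)

declare fl_sets[measurable]

lemma fl_comp: "real_of_int (fl x $ i) \<le> x $ i" "x $ i < real_of_int (fl x $ i) + 1"
  using fl_eq_iff[of x "fl x"] by auto

lemma emeasure_fl_cell: "emeasure lborel (fl -` {k}) \<le> 1"
proof -
  have "fl -` {k} \<subseteq> cbox (rv k) (rv k + (\<chi> i. 1))"
  proof
    fix x assume "x \<in> fl -` {k}"
    then have "fl x = k" by simp
    then show "x \<in> cbox (rv k) (rv k + (\<chi> i. 1))"
      using fl_comp[of x] by (auto simp: mem_box_cart rv_def less_imp_le)
  qed
  then have "emeasure lborel (fl -` {k}) \<le> emeasure lborel (cbox (rv k) (rv k + (\<chi> i. 1)))"
    by (intro emeasure_mono) auto
  also have "\<dots> = 1"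
    by (subst emeasure_lborel_cbox_eq) (auto simp: ones_Basis inner_add_left)
  finally show ?thesis .
qed

lemma cube_upper:
  fixes c :: "int^'n \<Rightarrow> ennreal"
  shows "(\<integral>\<^sup>+ x. c (fl x) \<partial>lborel) \<le> (\<integral>\<^sup>+ k. c k \<partial>count_space UNIV)"
proof -
  have "(\<integral>\<^sup>+ x. c (fl x) \<partial>lborel) = (\<integral>\<^sup>+ x. (\<integral>\<^sup>+ k. c k * indicator (fl -` {k}) x \<partial>count_space UNIV) \<partial>lborel)"
  proof (intro nn_integral_cong)
    fix x :: "real^'n"
    show "c (fl x) = (\<integral>\<^sup>+ k. c k * indicator (fl -` {k}) x \<partial>count_space UNIV)"
      by (subst count_single[of "fl x"]) (auto simp: indicator_def)
  qed
  also have "\<dots> = (\<integral>\<^sup>+ k. (\<integral>\<^sup>+ x. c k * indicator (fl -` {k}) x \<partial>lborel) \<partial>count_space UNIV)"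
    by (rule nn_integral_count_space_nn_integral) (use fl_sets in measurable)
  also have "\<dots> = (\<integral>\<^sup>+ k. c k * emeasure lborel (fl -` {k}) \<partial>count_space UNIV)"
    by (intro nn_integral_cong nn_integral_cmult_indicator) (simp add: fl_sets)
  also have "\<dots> \<le> (\<integral>\<^sup>+ k. c k \<partial>count_space UNIV)"
    by (intro nn_integral_mono) (use emeasure_fl_cell mult_left_mono in fastforce)
  finally show ?thesis .
qed

lemma box_shift_emeasure:
  fixes l u :: "real^'n"
  shows "emeasure lborel (box (a + l) (a + u)) = emeasure lborel (box l u)"
  by (simp add: emeasure_lborel_box_eq inner_add_left)

lemma cube_lower:
  fixes c :: "int^'n \<Rightarrow> ennreal" and l u :: "real^'n"
  assumes "\<And>i. 0 \<le> l $ i" "\<And>i. u $ i \<le> 1"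
  shows "(\<integral>\<^sup>+ x. c (fl x) * indicator (box l u) (x - rv (fl x)) \<partial>lborel)
      = (\<integral>\<^sup>+ k. c k \<partial>count_space UNIV) * emeasure lborel (box l u)"
proof -
  have inbox: "fl x = k" if "x \<in> box (rv k + l) (rv k + u)" for x k
    using that assms unfolding fl_eq_iff by (auto simp: mem_box_cart rv_def) (smt (verit))+
  have "(\<integral>\<^sup>+ x. c (fl x) * indicator (box l u) (x - rv (fl x)) \<partial>lborel)
     = (\<integral>\<^sup>+ x. (\<integral>\<^sup>+ k. c k * indicator (box (rv k + l) (rv k + u)) x \<partial>count_space UNIV) \<partial>lborel)"
  proof (intro nn_integral_cong)
    fix x :: "real^'n"
    have "(\<integral>\<^sup>+ k. c k * indicator (box (rv k + l) (rv k + u)) x \<partial>count_space UNIV)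
        = c (fl x) * indicator (box (rv (fl x) + l) (rv (fl x) + u)) x"
      by (rule count_single) (use inbox in \<open>auto simp: indicator_def\<close>)
    also have "indicator (box (rv (fl x) + l) (rv (fl x) + u)) x = (indicator (box l u) (x - rv (fl x)) :: ennreal)"
    proof -
      have "x \<in> box (rv (fl x) + l) (rv (fl x) + u) \<longleftrightarrow> x - rv (fl x) \<in> box l u"
        by (simp add: mem_box_cart less_diff_eq diff_less_eq add.commute)
      then show ?thesis by (simp add: indicator_def)
    qed
    finally show "c (fl x) * indicator (box l u) (x - rv (fl x))
       = (\<integral>\<^sup>+ k. c k * indicator (box (rv k + l) (rv k + u)) x \<partial>count_space UNIV)" by simp
  qed
  also have "\<dots> = (\<integral>\<^sup>+ k. (\<integral>\<^sup>+ x. c k * indicator (box (rv k + l) (rv k + u)) x \<partial>lborel) \<partial>count_space UNIV)"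
    by (rule nn_integral_count_space_nn_integral) auto
  also have "\<dots> = (\<integral>\<^sup>+ k. c k * emeasure lborel (box l u) \<partial>count_space UNIV)"
    by (intro nn_integral_cong, subst nn_integral_cmult_indicator) (auto simp: box_shift_emeasure)
  also have "\<dots> = (\<integral>\<^sup>+ k. c k \<partial>count_space UNIV) * emeasure lborel (box l u)"
    by (rule nn_integral_multc) simp
  finally show ?thesis .
qed

lemma conv_sum_a:
  fixes c :: "'a \<Rightarrow> real"
  assumes "\<And>k. 0 \<le> c k" "c summable_on UNIV"
  shows "(\<integral>\<^sup>+ k. ennreal (c k) \<partial>count_space UNIV) = ennreal (infsum c UNIV)"
proof -
  have "(\<lambda>x. norm (c x)) summable_on UNIV" using assms by simp
  then have "Infinite_Set_Sum.abs_summable_on c UNIV" using abs_summable_equivalent by blast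
  then show ?thesis using assms by (simp add: nn_integral_conv_infsetsum infsetsum_infsum)
qed

lemma conv_sum_b:
  fixes c :: "'a \<Rightarrow> real"
  assumes "\<And>k. 0 \<le> c k" "(\<integral>\<^sup>+ k. ennreal (c k) \<partial>count_space UNIV) < \<infinity>"
  shows "c summable_on UNIV" "infsum c UNIV = enn2real (\<integral>\<^sup>+ k. ennreal (c k) \<partial>count_space UNIV)"
proof -
  have "integrable (count_space UNIV) c"
    by (rule integrableI_bounded) (use assms in auto)
  then have 1: "Infinite_Set_Sum.abs_summable_on c UNIV" by (simp add: abs_summable_on_def)
  then have "(\<lambda>x. norm (c x)) summable_on UNIV" using abs_summable_equivalent by blast
  then show "c summable_on UNIV" using assms by simp
  show "infsum c UNIV = enn2real (\<integral>\<^sup>+ k. ennreal (c k) \<partial>count_space UNIV)"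
    using 1 assms by (simp add: infsetsum_infsum[symmetric] infsetsum_conv_nn_integral)
qed

lemma AE_pick:
  fixes l u :: "real^'n"
  assumes "AE x in lebesgue. P x" "\<And>i. l $ i < u $ i"
  shows "\<exists>x\<in>box l u. P x"
proof (rule ccontr)
  assume "\<not> ?thesis"
  then have nP: "\<And>x. x \<in> box l u \<Longrightarrow> \<not> P x" by auto
  have "AE x in lebesgue. x \<notin> box l u" using assms(1) by (rule eventually_mono) (use nP in auto)
  then have "emeasure lebesgue (box l u) = 0"
    by (subst (asm) AE_iff_measurable[of "box l u"]) auto
  then have "emeasure lborel (box l u) = 0" by simp
  moreover have "emeasure lborel (box l u) > 0"
    using assms(2) by (subst emeasure_lborel_box_eq) (auto simp: less_imp_le Basis_vec_def inner_axis
        intro!: prod_pos)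
  ultimately show False by simp
qed



definition stp :: "(int^'n \<Rightarrow> complex) \<Rightarrow> real^'n \<Rightarrow> complex" where
  "stp a x = complex_of_real (cmod (a (fl x)))"

lemma comp_fl_meas: "(\<lambda>x. h (fl x)) \<in> borel_measurable borel"
  by (rule measurable_compose[OF fl_meas]) simp

lemma stp_meas: "stp a \<in> borel_measurable lebesgue"
proof -
  have "stp a \<in> borel_measurable borel" unfolding stp_def by (rule comp_fl_meas)
  then have "stp a \<in> borel_measurable lborel" by simp
  then show ?thesis by (rule measurable_completion)
qed

lemma ess_lb:
  fixes h :: "real^'n \<Rightarrow> real"
  assumes "AE x in lebesgue. h x \<le> C" "\<And>x. 0 \<le> h x"
  shows "0 \<le> C"
proof -
  obtain x :: "real^'n" where "h x \<le> C"
    using AE_pick[OF assms(1), of 0 "\<chi> i. 1"] by auto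
  then show ?thesis using assms(2)[of x] by linarith
qed

lemma ess_set_bdd:
  fixes f :: "real^'n \<Rightarrow> complex"
  shows "bdd_below {C. AE x in lebesgue. cmod (f x) * jb x powr s \<le> C}"
  unfolding bdd_below_def
proof (rule exI[of _ 0], intro ballI)
  fix C assume "C \<in> {C. AE x in lebesgue. cmod (f x) * jb x powr s \<le> C}"
  then have "AE x in lebesgue. cmod (f x) * jb x powr s \<le> C" by simp
  then show "0 \<le> C" by (rule ess_lb) simp
qed

lemma normL_nonneg:
  fixes f :: "real^'n \<Rightarrow> complex"
  assumes "inL p s f" shows "0 \<le> normL p s f"
proof (cases "p = \<infinity>")
  case True
  then obtain C where "AE x in lebesgue. cmod (f x) * jb x powr s \<le> C" using assms unfolding inL_def by auto
  then have ne: "{C. AE x in lebesgue. cmod (f x) * jb x powr s \<le> C} \<noteq> {}" by auto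
  have "0 \<le> Inf {C. AE x in lebesgue. cmod (f x) * jb x powr s \<le> C}"
  proof (rule cInf_greatest[OF ne])
    fix C assume "C \<in> {C. AE x in lebesgue. cmod (f x) * jb x powr s \<le> C}"
    then have "AE x in lebesgue. cmod (f x) * jb x powr s \<le> C" by simp
    then show "0 \<le> C" by (rule ess_lb) simp
  qed
  then show ?thesis using True unfolding normL_def by simp
next
  case False then show ?thesis unfolding normL_def by simp
qed

lemma norml_nonneg:
  fixes a :: "int^'n \<Rightarrow> complex"
  assumes "inl p s a" shows "0 \<le> norml p s a"
proof (cases "p = \<infinity>")
  case True
  then have bdd: "bdd_above (range (\<lambda>k. cmod (a k) * jbZ k powr s))" using assms unfolding inl_def by auto
  have "cmod (a 0) * jbZ (0::int^'n) powr s \<le> (SUP k. cmod (a k) * jbZ k powr s)"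
    by (rule cSUP_upper[OF UNIV_I bdd])
  moreover have "0 \<le> cmod (a 0) * jbZ (0::int^'n) powr s" by simp
  ultimately have "0 \<le> (SUP k. cmod (a k) * jbZ k powr s)" by linarith
  then show ?thesis using True unfolding norml_def by simp
next
  case False then show ?thesis unfolding norml_def by simp
qed

lemma le_eps_nat: fixes a b :: real assumes "\<And>k::nat. a \<le> b + inverse (real (Suc k))" shows "a \<le> b"
proof (rule ccontr)
  assume "\<not> a \<le> b"
  then obtain k where "inverse (real (Suc k)) < a - b" using reals_Archimedean[of "a - b"] by auto
  then show False using assms[of k] by linarith
qed

lemma ess_attained:
  fixes f :: "real^'n \<Rightarrow> complex"
  assumes "inL \<infinity> s f"
  shows "AE x in lebesgue. cmod (f x) * jb x powr s \<le> normL \<infinity> s f"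
proof -
  define S where "S = {C. AE x in lebesgue. cmod (f x) * jb x powr s \<le> C}"
  have ne: "S \<noteq> {}" using assms unfolding inL_def S_def by auto
  have bdd: "bdd_below S" unfolding S_def by (rule ess_set_bdd)
  have "\<exists>C\<in>S. C < Inf S + inverse (real (Suc k))" for k
    by (rule cInf_lessD[OF ne]) simp
  then obtain Cs where Cs: "\<And>k. Cs k \<in> S" "\<And>k. Cs k < Inf S + inverse (real (Suc k))" by metis
  have "AE x in lebesgue. \<forall>k. cmod (f x) * jb x powr s \<le> Cs k"
    using Cs(1) unfolding S_def by (subst AE_all_countable) auto
  then have "AE x in lebesgue. cmod (f x) * jb x powr s \<le> Inf S"
  proof (rule eventually_mono)
    fix x assume H: "\<forall>k. cmod (f x) * jb x powr s \<le> Cs k"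
    show "cmod (f x) * jb x powr s \<le> Inf S"
    proof (rule le_eps_nat)
      fix k
      have "cmod (f x) * jb x powr s \<le> Cs k" using H by simp
      also have "Cs k \<le> Inf S + inverse (real (Suc k))" using Cs(2)[of k] by simp
      finally show "cmod (f x) * jb x powr s \<le> Inf S + inverse (real (Suc k))" .
    qed
  qed
  then show ?thesis unfolding normL_def S_def by simp
qed

abbreviation EE :: "'n::finite itself \<Rightarrow> real" where "EE _ \<equiv> 1 + real CARD('n)"

lemma EE_pos: "0 < EE TYPE('n::finite)" by simp

lemma UB:
  fixes a :: "int^'n \<Rightarrow> complex"
  assumes "1 \<le> p" "inl p s a"
  shows "inL p s (stp a) \<and> normL p s (stp a) \<le> EE TYPE('n) powr \<bar>s\<bar> * norml p s a"
proof (cases "p = \<infinity>")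
  case True
  define B where "B = (SUP k. cmod (a k) * jbZ k powr s)"
  have bdd: "bdd_above (range (\<lambda>k. cmod (a k) * jbZ k powr s))" using assms True unfolding inl_def by auto
  have pt: "cmod (stp a x) * jb x powr s \<le> EE TYPE('n) powr \<bar>s\<bar> * B" for x
  proof -
    have "cmod (stp a x) * jb x powr s = cmod (a (fl x)) * jb x powr s" by (simp add: stp_def)
    also have "\<dots> \<le> cmod (a (fl x)) * (EE TYPE('n) powr \<bar>s\<bar> * jbZ (fl x) powr s)"
      by (rule mult_left_mono) (use jb_vs_jbZ(1) in auto)
    also have "\<dots> = EE TYPE('n) powr \<bar>s\<bar> * (cmod (a (fl x)) * jbZ (fl x) powr s)" by simp
    also have "\<dots> \<le> EE TYPE('n) powr \<bar>s\<bar> * B"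
      unfolding B_def by (rule mult_left_mono) (use bdd in \<open>auto intro: cSUP_upper\<close>)
    finally show ?thesis .
  qed
  then have inS: "AE x in lebesgue. cmod (stp a x) * jb x powr s \<le> EE TYPE('n) powr \<bar>s\<bar> * B" by simp
  have "inL p s (stp a)" using True inS stp_meas unfolding inL_def by auto
  moreover have "normL p s (stp a) \<le> EE TYPE('n) powr \<bar>s\<bar> * B"
    using True unfolding normL_def by (auto intro!: cInf_lower inS ess_set_bdd)
  ultimately show ?thesis using True unfolding B_def norml_def by simp
next
  case False
  define pr where "pr = enn2real p"
  have p_eq: "p = ennreal pr" using False unfolding pr_def by (cases p) auto
  have pr1: "1 \<le> pr" unfolding pr_def using enn2real_mono[OF assms(1)] False by (simp add: top.not_eq_extremum)
  define c where "c k = cmod (a k) powr pr * jbZ k powr (pr * s)" for k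
  have c0: "0 \<le> c k" for k unfolding c_def by simp
  have csum: "c summable_on UNIV" using assms(2) False unfolding inl_def c_def pr_def by simp
  define W where "W = EE TYPE('n) powr \<bar>pr * s\<bar>"
  have W0: "0 \<le> W" unfolding W_def by simp
  have pt: "cmod (stp a x) powr pr * jb x powr (pr * s) \<le> W * c (fl x)" for x
  proof -
    have "cmod (stp a x) powr pr * jb x powr (pr * s) = cmod (a (fl x)) powr pr * jb x powr (pr * s)"
      by (simp add: stp_def)
    also have "\<dots> \<le> cmod (a (fl x)) powr pr * (W * jbZ (fl x) powr (pr * s))"
      unfolding W_def by (rule mult_left_mono) (use jb_vs_jbZ(1) in auto)
    also have "\<dots> = W * c (fl x)" unfolding c_def by simp
    finally show ?thesis .
  qed
  define I where "I = (\<integral>\<^sup>+ x. ennreal (cmod (stp a x) powr pr * jb x powr (pr * s)) \<partial>lebesgue)"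
  have "I = (\<integral>\<^sup>+ x. ennreal (cmod (stp a x) powr pr * jb x powr (pr * s)) \<partial>lborel)"
    unfolding I_def by (rule nn_integral_completion)
  also have "\<dots> \<le> (\<integral>\<^sup>+ x. ennreal W * ennreal (c (fl x)) \<partial>lborel)"
  proof (intro nn_integral_mono)
    fix x
    have "ennreal (cmod (stp a x) powr pr * jb x powr (pr * s)) \<le> ennreal (W * c (fl x))"
      by (rule ennreal_leI[OF pt])
    also have "\<dots> = ennreal W * ennreal (c (fl x))" by (simp add: ennreal_mult W0 c0)
    finally show "ennreal (cmod (stp a x) powr pr * jb x powr (pr * s)) \<le> ennreal W * ennreal (c (fl x))" .
  qed
  also have "\<dots> = ennreal W * (\<integral>\<^sup>+ x. ennreal (c (fl x)) \<partial>lborel)"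
    by (rule nn_integral_cmult) (use comp_fl_meas[of "\<lambda>k. ennreal (c k)"] in simp)
  also have "\<dots> \<le> ennreal W * (\<integral>\<^sup>+ k. ennreal (c k) \<partial>count_space UNIV)"
    by (intro mult_left_mono cube_upper) simp
  also have "\<dots> = ennreal (W * infsum c UNIV)"
    using c0 by (simp add: conv_sum_a[OF c0 csum] ennreal_mult[OF W0] infsum_nonneg)
  finally have Ile: "I \<le> ennreal (W * infsum c UNIV)" .
  then have "I < \<infinity>" using le_less_trans by fastforce
  then have inL: "inL p s (stp a)" using False stp_meas unfolding inL_def I_def pr_def by simp
  have S0: "0 \<le> infsum c UNIV" using c0 by (simp add: infsum_nonneg)
  have "enn2real I \<le> W * infsum c UNIV" using Ile W0 S0
    by (metis enn2real_ennreal enn2real_mono ennreal_less_top mult_nonneg_nonneg)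
  then have "enn2real I powr (1 / pr) \<le> (W * infsum c UNIV) powr (1 / pr)"
    using pr1 by (intro powr_mono2) auto
  also have "\<dots> = W powr (1 / pr) * infsum c UNIV powr (1 / pr)" using W0 S0 by (simp add: powr_mult)
  also have "W powr (1 / pr) = EE TYPE('n) powr \<bar>s\<bar>"
    unfolding W_def using pr1 by (simp add: powr_powr abs_mult)
  finally have "normL p s (stp a) \<le> EE TYPE('n) powr \<bar>s\<bar> * norml p s a"
    using False unfolding normL_def norml_def I_def c_def pr_def by simp
  then show ?thesis using inL by simp
qed



definition TT :: "(int^'n \<Rightarrow> complex) \<Rightarrow> (int^'n \<Rightarrow> complex) \<Rightarrow> int^'n \<Rightarrow> ennreal" where
  "TT a b m = (\<integral>\<^sup>+ j. ennreal (cmod (a (m - j)) * cmod (b j)) \<partial>count_space UNIV)"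

abbreviation hv :: "real^'n" where "hv \<equiv> (\<chi> i. 1/2)"
abbreviation onev :: "real^'n" where "onev \<equiv> (\<chi> i. 1)"

lemma emeasure_half_box: "emeasure lborel (box (0::real^'n) hv) = ennreal ((1/2) ^ CARD('n))"
  by (simp add: emeasure_lborel_box_eq ones_Basis)

lemma in_cell:
  fixes x :: "real^'n"
  assumes "x \<in> box (rv m + hv) (rv m + onev)"
  shows "fl x = m" "x - rv (fl x) \<in> box hv onev"
proof -
  have c: "real_of_int (m $ i) + 1/2 < x $ i \<and> x $ i < real_of_int (m $ i) + 1" for i
    using assms by (simp add: mem_box_cart rv_def)
  show fm: "fl x = m" unfolding fl_eq_iff
  proof
    fix i show "real_of_int (m $ i) \<le> x $ i \<and> x $ i < real_of_int (m $ i) + 1" using c[of i] by linarith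
  qed
  show "x - rv (fl x) \<in> box hv onev" unfolding fm mem_box_cart
  proof
    fix i show "hv $ i < (x - rv m) $ i \<and> (x - rv m) $ i < onev $ i" using c[of i] by (simp add: rv_def)
  qed
qed

lemma fl_diff:
  fixes x y :: "real^'n"
  assumes "x - rv (fl x) \<in> box hv onev" "y - rv (fl y) \<in> box 0 hv"
  shows "fl (x - y) = fl x - fl y"
  unfolding fl_eq_iff
proof
  fix i
  have "1/2 < x $ i - real_of_int (fl x $ i)" "x $ i - real_of_int (fl x $ i) < 1"
       "0 < y $ i - real_of_int (fl y $ i)" "y $ i - real_of_int (fl y $ i) < 1/2"
    using assms by (auto simp: mem_box_cart rv_def)
  then show "real_of_int ((fl x - fl y) $ i) \<le> (x - y) $ i \<and> (x - y) $ i < real_of_int ((fl x - fl y) $ i) + 1"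
    by simp
qed

lemma KP:
  fixes a b :: "int^'n \<Rightarrow> complex" and x :: "real^'n"
  assumes int: "integrable lebesgue (\<lambda>y. stp a (x - y) * stp b y)"
    and xc: "x - rv (fl x) \<in> box hv onev"
  shows "TT a b (fl x) * ennreal ((1/2) ^ CARD('n)) \<le> ennreal (cmod (convR (stp a) (stp b) x))"
proof -
  define \<phi> where "\<phi> y = cmod (a (fl (x - y))) * cmod (b (fl y))" for y
  have eq: "(\<lambda>y. stp a (x - y) * stp b y) = (\<lambda>y. complex_of_real (\<phi> y))"
    by (auto simp: stp_def \<phi>_def)
  have iphi: "integrable lebesgue \<phi>" using int unfolding eq complex_of_real_integrable_eq .
  have conv: "convR (stp a) (stp b) x = complex_of_real (integral\<^sup>L lebesgue \<phi>)"
    unfolding convR_def eq by simp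
  have "TT a b (fl x) * ennreal ((1/2) ^ CARD('n))
      = (\<integral>\<^sup>+ y. ennreal (cmod (a (fl x - fl y)) * cmod (b (fl y))) * indicator (box 0 hv) (y - rv (fl y)) \<partial>lborel)"
    unfolding TT_def emeasure_half_box[symmetric]
    by (rule cube_lower[symmetric, where c="\<lambda>j. ennreal (cmod (a (fl x - j)) * cmod (b j))"]) auto
  also have "\<dots> \<le> (\<integral>\<^sup>+ y. ennreal (\<phi> y) \<partial>lborel)"
  proof (intro nn_integral_mono)
    fix y :: "real^'n"
    show "ennreal (cmod (a (fl x - fl y)) * cmod (b (fl y))) * indicator (box 0 hv) (y - rv (fl y)) \<le> ennreal (\<phi> y)"
    proof (cases "y - rv (fl y) \<in> box 0 hv")
      case True
      then show ?thesis using fl_diff[OF xc True] by (simp add: \<phi>_def)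
    qed simp
  qed
  also have "\<dots> = (\<integral>\<^sup>+ y. ennreal (\<phi> y) \<partial>lebesgue)" by (rule nn_integral_completion[symmetric])
  also have "\<dots> = ennreal (integral\<^sup>L lebesgue \<phi>)"
    by (rule nn_integral_eq_integral[OF iphi]) (simp add: \<phi>_def)
  also have "\<dots> \<le> ennreal (cmod (convR (stp a) (stp b) x))"
    unfolding conv by (intro ennreal_leI) simp
  finally show ?thesis .
qed

lemma TT_finite:
  fixes a b :: "int^'n \<Rightarrow> complex"
  assumes "AE x in lebesgue. integrable lebesgue (\<lambda>y. stp a (x - y) * stp b y)"
  shows "TT a b m < \<infinity>"
proof -
  obtain x :: "real^'n" where x: "x \<in> box (rv m + hv) (rv m + onev)"
    and int: "integrable lebesgue (\<lambda>y. stp a (x - y) * stp b y)"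
    using AE_pick[OF assms, of "rv m + hv" "rv m + onev"] by auto
  have "TT a b m * ennreal ((1/2) ^ CARD('n)) \<le> ennreal (cmod (convR (stp a) (stp b) x))"
    using KP[OF int in_cell(2)[OF x]] in_cell(1)[OF x] by simp
  then have "TT a b m * ennreal ((1/2) ^ CARD('n)) < \<infinity>"
    by (rule le_less_trans) simp
  then show ?thesis by (cases "TT a b m = 0") (auto simp: ennreal_mult_less_top)
qed

lemma convZ_bound:
  fixes a b :: "int^'n \<Rightarrow> complex"
  assumes "TT a b m < \<infinity>"
  shows "(\<lambda>j. a (m - j) * b j) summable_on UNIV" "cmod (convZ a b m) \<le> enn2real (TT a b m)"
proof -
  define c where "c j = cmod (a (m - j)) * cmod (b j)" for j
  have c0: "0 \<le> c j" for j unfolding c_def by simp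
  have fin: "(\<integral>\<^sup>+ j. ennreal (c j) \<partial>count_space UNIV) < \<infinity>" using assms unfolding TT_def c_def .
  have nsum: "(\<lambda>j. norm (a (m - j) * b j)) summable_on UNIV"
    using conv_sum_b(1)[OF c0 fin] unfolding c_def by (simp add: norm_mult)
  then show "(\<lambda>j. a (m - j) * b j) summable_on UNIV" by (rule abs_summable_summable)
  have "cmod (convZ a b m) \<le> infsum (\<lambda>j. norm (a (m - j) * b j)) UNIV"
    unfolding convZ_def by (rule norm_infsum_bound) (rule nsum)
  also have "\<dots> = infsum c UNIV" unfolding c_def by (simp add: norm_mult)
  also have "\<dots> = enn2real (TT a b m)" using conv_sum_b(2)[OF c0 fin] unfolding TT_def c_def .
  finally show "cmod (convZ a b m) \<le> enn2real (TT a b m)" .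
qed

lemma KP_real:
  fixes a b :: "int^'n \<Rightarrow> complex" and x :: "real^'n"
  assumes int: "integrable lebesgue (\<lambda>y. stp a (x - y) * stp b y)"
    and xc: "x - rv (fl x) \<in> box hv onev" and fin: "TT a b (fl x) < \<infinity>"
  shows "(1/2) ^ CARD('n) * enn2real (TT a b (fl x)) \<le> cmod (convR (stp a) (stp b) x)"
proof -
  have "ennreal (enn2real (TT a b (fl x)) * (1/2) ^ CARD('n)) \<le> ennreal (cmod (convR (stp a) (stp b) x))"
    using KP[OF int xc] fin by (simp add: ennreal_mult ennreal_enn2real_if)
  then show ?thesis by (simp add: mult.commute)
qed



lemma emeasure_upper_box: "emeasure lborel (box hv (onev::real^'n)) = ennreal (1 / 2 ^ CARD('n))"
  by (simp add: emeasure_lborel_box_eq ones_Basis inner_diff_left power_one_over)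

lemma main_bound:
  fixes a b :: "int^'n \<Rightarrow> complex" and q :: ennreal
  assumes q1: "1 \<le> q"
    and AEi: "AE x in lebesgue. integrable lebesgue (\<lambda>y. stp a (x - y) * stp b y)"
    and ic: "inL q s (convR (stp a) (stp b))"
  shows "inl q s (convZ a b) \<and>
     norml q s (convZ a b) \<le> (2 ^ CARD('n) * 2 ^ CARD('n)) * EE TYPE('n) powr \<bar>s\<bar> * normL q s (convR (stp a) (stp b))"
proof -
  define P :: real where "P = 2 ^ CARD('n)"
  have P1: "1 \<le> P" unfolding P_def by simp
  define E where "E = EE TYPE('n)"
  have E0: "0 < E" unfolding E_def by simp
  define h where "h = convR (stp a) (stp b)"
  define N where "N = normL q s h"
  have N0: "0 \<le> N" unfolding N_def h_def using normL_nonneg[OF ic] .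
  define t where "t m = enn2real (TT a b m)" for m
  have t0: "0 \<le> t m" for m unfolding t_def by simp
  have Tfin: "TT a b m < \<infinity>" for m by (rule TT_finite[OF AEi])
  have conv_le: "cmod (convZ a b m) \<le> t m" for m unfolding t_def by (rule convZ_bound(2)[OF Tfin])
  have key: "AE x in lebesgue. x - rv (fl x) \<in> box hv onev \<longrightarrow> t (fl x) \<le> P * cmod (h x)"
    using AEi
  proof (rule eventually_mono, intro impI)
    fix x :: "real^'n"
    assume int: "integrable lebesgue (\<lambda>y. stp a (x - y) * stp b y)" and xc: "x - rv (fl x) \<in> box hv onev"
    have "(1/2) ^ CARD('n) * t (fl x) \<le> cmod (h x)"
      unfolding t_def h_def by (rule KP_real[OF int xc Tfin])
    then show "t (fl x) \<le> P * cmod (h x)" unfolding P_def by (simp add: power_one_over field_simps)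
  qed
  show ?thesis
  proof (cases "q = \<infinity>")
    case True
    have AEs: "AE x in lebesgue. cmod (h x) * jb x powr s \<le> N"
      unfolding N_def True using ess_attained ic True unfolding h_def by blast
    have bnd: "cmod (convZ a b m) * jbZ m powr s \<le> P * E powr \<bar>s\<bar> * N" for m
    proof -
      obtain x :: "real^'n" where x: "x \<in> box (rv m + hv) (rv m + onev)"
        and kx: "x - rv (fl x) \<in> box hv onev \<longrightarrow> t (fl x) \<le> P * cmod (h x)"
        and sx: "cmod (h x) * jb x powr s \<le> N"
        using AE_pick[OF AE_conjI[OF key AEs], of "rv m + hv" "rv m + onev"] by auto
      have fm: "fl x = m" by (rule in_cell(1)[OF x])
      have tle: "t m \<le> P * cmod (h x)" using kx in_cell(2)[OF x] fm by simp
      have "cmod (convZ a b m) * jbZ m powr s \<le> t m * jbZ m powr s"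
        by (rule mult_right_mono[OF conv_le]) simp
      also have "\<dots> \<le> (P * cmod (h x)) * jbZ m powr s"
        by (rule mult_right_mono[OF tle]) simp
      also have "\<dots> \<le> (P * cmod (h x)) * (E powr \<bar>s\<bar> * jb x powr s)"
        using jb_vs_jbZ(2)[of x s] P1 unfolding fm E_def by (intro mult_left_mono) auto
      also have "\<dots> = P * E powr \<bar>s\<bar> * (cmod (h x) * jb x powr s)" by (simp add: ac_simps)
      also have "\<dots> \<le> P * E powr \<bar>s\<bar> * N"
        using sx P1 E0 by (intro mult_left_mono) auto
      finally show ?thesis .
    qed
    have bdd: "bdd_above (range (\<lambda>k. cmod (convZ a b k) * jbZ k powr s))"
      by (rule bdd_aboveI2[where M="P * E powr \<bar>s\<bar> * N"]) (rule bnd)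
    have "norml q s (convZ a b) = (SUP k. cmod (convZ a b k) * jbZ k powr s)"
      using True by (simp add: norml_def)
    also have "\<dots> \<le> P * E powr \<bar>s\<bar> * N"
      by (rule cSUP_least) (auto intro: bnd)
    also have "\<dots> \<le> (P * P) * E powr \<bar>s\<bar> * N"
    proof -
      have PP: "P \<le> P * P" using P1 mult_left_mono[of 1 P P] by simp
      have "0 \<le> E powr \<bar>s\<bar> * N" using N0 by simp
      from mult_right_mono[OF PP this] show ?thesis by (simp only: mult.assoc)
    qed
    finally have nb: "norml q s (convZ a b) \<le> (P * P) * E powr \<bar>s\<bar> * N" .
    have "inl q s (convZ a b)" using True bdd by (simp add: inl_def)
    then show ?thesis using nb unfolding P_def E_def N_def h_def by blast
  next
    case False
    define qr where "qr = enn2real q"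
    have qr1: "1 \<le> qr" unfolding qr_def using enn2real_mono[OF q1] False by (simp add: top.not_eq_extremum)
    define W where "W = E powr \<bar>qr * s\<bar>"
    have W0: "0 < W" unfolding W_def using E0 by simp
    define \<Lambda> where "\<Lambda> = P powr qr * W"
    have L0: "0 < \<Lambda>" unfolding \<Lambda>_def using W0 P1 by simp
    define d where "d m = t m powr qr * jbZ m powr (qr * s)" for m
    define e where "e m = cmod (convZ a b m) powr qr * jbZ m powr (qr * s)" for m
    have d0: "0 \<le> d m" for m unfolding d_def by simp
    have e0: "0 \<le> e m" for m unfolding e_def by simp
    have ed: "e m \<le> d m" for m unfolding e_def d_def
      using qr1 by (intro mult_right_mono powr_mono2 conv_le) auto
    define g where "g x = cmod (h x) powr qr * jb x powr (qr * s)" for x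
    define I where "I = (\<integral>\<^sup>+ x. ennreal (g x) \<partial>lebesgue)"
    have Ifin: "I < \<infinity>" using ic False unfolding inL_def I_def g_def h_def qr_def by simp
    have NI: "N powr qr = enn2real I"
    proof -
      have "N = enn2real I powr (1 / qr)" using False unfolding N_def normL_def I_def g_def qr_def by simp
      then show ?thesis using qr1 by (simp add: powr_powr)
    qed
    have pt: "ennreal (d (fl x)) * indicator (box hv onev) (x - rv (fl x)) \<le> ennreal \<Lambda> * ennreal (g x)"
      if "x - rv (fl x) \<in> box hv onev \<longrightarrow> t (fl x) \<le> P * cmod (h x)" for x
    proof (cases "x - rv (fl x) \<in> box hv onev")
      case True
      then have tle: "t (fl x) \<le> P * cmod (h x)" using that by simp
      have j: "jbZ (fl x) powr (qr * s) \<le> W * jb x powr (qr * s)"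
        unfolding W_def E_def by (rule jb_vs_jbZ(2))
      have tq: "t (fl x) powr qr \<le> (P * cmod (h x)) powr qr"
        by (rule powr_mono2) (use qr1 t0 tle in auto)
      have "d (fl x) \<le> (P * cmod (h x)) powr qr * (W * jb x powr (qr * s))"
        unfolding d_def by (rule mult_mono[OF tq j]) auto
      also have "(P * cmod (h x)) powr qr = P powr qr * cmod (h x) powr qr"
        using P1 by (simp add: powr_mult)
      also have "P powr qr * cmod (h x) powr qr * (W * jb x powr (qr * s)) = \<Lambda> * g x"
        unfolding \<Lambda>_def g_def by (simp only: mult_ac)
      finally have "ennreal (d (fl x)) \<le> ennreal (\<Lambda> * g x)" by (rule ennreal_leI)
      then show ?thesis using True L0 by (simp add: ennreal_mult g_def)
    qed simp
    have hm[measurable]: "h \<in> borel_measurable lebesgue" using ic unfolding inL_def h_def by simp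
    have "(\<lambda>x::real^'n. jb x) \<in> borel_measurable borel" unfolding jb_def by measurable
    then have jbm[measurable]: "(\<lambda>x::real^'n. jb x) \<in> borel_measurable lebesgue"
      by (intro measurable_completion) simp
    have gm: "(\<lambda>x. ennreal (g x)) \<in> borel_measurable lebesgue" unfolding g_def by measurable
    define D where "D = (\<integral>\<^sup>+ k. ennreal (d k) \<partial>count_space UNIV)"
    have "D * ennreal (1 / P) = (\<integral>\<^sup>+ x. ennreal (d (fl x)) * indicator (box hv onev) (x - rv (fl x)) \<partial>lborel)"
      unfolding D_def P_def emeasure_upper_box[symmetric]
      by (rule cube_lower[symmetric, where c="\<lambda>k. ennreal (d k)"]) auto
    also have "\<dots> = (\<integral>\<^sup>+ x. ennreal (d (fl x)) * indicator (box hv onev) (x - rv (fl x)) \<partial>lebesgue)"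
      by (rule nn_integral_completion[symmetric])
    also have "\<dots> \<le> (\<integral>\<^sup>+ x. ennreal \<Lambda> * ennreal (g x) \<partial>lebesgue)"
      by (rule nn_integral_mono_AE) (use key pt in \<open>auto elim: eventually_mono\<close>)
    also have "\<dots> = ennreal \<Lambda> * I" unfolding I_def
      by (rule nn_integral_cmult[OF gm])
    finally have DI: "D * ennreal (1 / P) \<le> ennreal \<Lambda> * I" .
    have "ennreal \<Lambda> * I < \<infinity>" using Ifin by (simp add: ennreal_mult_less_top)
    from le_less_trans[OF DI this] have DPfin: "D * ennreal (1 / P) < \<infinity>" .
    then have Dfin: "D < \<infinity>" using P1 by (cases "D = 0") (auto simp: ennreal_mult_less_top)
    have dsum: "d summable_on UNIV" and dD: "infsum d UNIV = enn2real D"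
      using conv_sum_b[OF d0 Dfin[unfolded D_def]] unfolding D_def by auto
    have esum: "e summable_on UNIV"
      by (rule summable_on_comparison_test[OF dsum]) (use ed e0 in auto)
    have "enn2real (D * ennreal (1 / P)) \<le> enn2real (ennreal \<Lambda> * I)"
      by (rule enn2real_mono[OF DI]) (use Ifin in \<open>simp add: ennreal_mult_less_top\<close>)
    then have X: "enn2real D * (1 / P) \<le> \<Lambda> * enn2real I"
      using P1 L0 by (simp only: enn2real_mult enn2real_ennreal) simp
    have "infsum d UNIV = P * (infsum d UNIV * (1 / P))" using P1 by simp
    also have "\<dots> \<le> P * (\<Lambda> * N powr qr)"
      using X P1 unfolding dD NI by (intro mult_left_mono) auto
    finally have idle: "infsum d UNIV \<le> P * \<Lambda> * N powr qr" by (simp only: mult.assoc)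
    define R where "R = (P * P) * E powr \<bar>s\<bar> * N"
    have R0: "0 \<le> R" unfolding R_def using P1 E0 N0 by simp
    have PP: "P \<le> P powr qr"
      using powr_mono[OF qr1, of P] P1 by simp
    have "infsum e UNIV \<le> infsum d UNIV" by (rule infsum_mono[OF esum dsum ed])
    also have "\<dots> \<le> P * \<Lambda> * N powr qr" by (rule idle)
    also have "\<dots> \<le> P powr qr * \<Lambda> * N powr qr"
    proof -
      have "0 \<le> \<Lambda> * N powr qr" using L0 by simp
      from mult_right_mono[OF PP this] show ?thesis by (simp only: mult.assoc)
    qed
    also have "\<dots> = R powr qr"
    proof -
      have e1: "R powr qr = (P * P) powr qr * (E powr \<bar>s\<bar>) powr qr * N powr qr"
        unfolding R_def using P1 E0 N0 by (simp add: powr_mult)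
      have e2: "(P * P) powr qr = P powr qr * P powr qr" using P1 by (simp add: powr_mult)
      have e3: "(E powr \<bar>s\<bar>) powr qr = W" unfolding W_def using qr1
        by (simp add: powr_powr abs_mult mult.commute)
      show ?thesis unfolding e1 e2 e3 \<Lambda>_def by (simp only: mult_ac)
    qed
    finally have "infsum e UNIV \<le> R powr qr" .
    then have "infsum e UNIV powr (1 / qr) \<le> (R powr qr) powr (1 / qr)"
      using qr1 infsum_nonneg[of UNIV e] e0 by (intro powr_mono2) auto
    also have "\<dots> = R" using qr1 R0 by (simp add: powr_powr)
    finally have "norml q s (convZ a b) \<le> R"
      unfolding norml_def e_def qr_def using False by simp
    moreover have "inl q s (convZ a b)" using esum False unfolding inl_def e_def qr_def by simp
    ultimately show ?thesis unfolding R_def P_def E_def N_def h_def by simp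
  qed
qed



theorem proposition4p1:
  fixes q q1 q2 :: ennreal and s s1 s2 :: real
  assumes "1 \<le> q" and "1 \<le> q1" and "1 \<le> q2"
    and "L_conv_incl TYPE('n::finite) q1 s1 q2 s2 q s"
  shows "l_conv_incl TYPE('n) q1 s1 q2 s2 q s"
proof -
  obtain C where C: "\<forall>(f::real^'n \<Rightarrow> complex) g. inL q1 s1 f \<longrightarrow> inL q2 s2 g \<longrightarrow>
        (AE x in lebesgue. integrable lebesgue (\<lambda>y. f (x - y) * g y)) \<and>
        inL q s (convR f g) \<and>
        normL q s (convR f g) \<le> C * normL q1 s1 f * normL q2 s2 g"
    using assms(4) unfolding L_conv_incl_def by blast
  define E where "E = EE TYPE('n)"
  define P :: real where "P = 2 ^ CARD('n)"
  define C0 where "C0 = max C 0"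
  define K where "K = (P * P) * E powr \<bar>s\<bar> * C0 * E powr \<bar>s1\<bar> * E powr \<bar>s2\<bar>"
  show ?thesis unfolding l_conv_incl_def
  proof (rule exI[of _ K], intro allI impI)
    fix a b :: "int^'n \<Rightarrow> complex"
    assume ia: "inl q1 s1 a" and ib: "inl q2 s2 b"
    have fa: "inL q1 s1 (stp a)" and na: "normL q1 s1 (stp a) \<le> E powr \<bar>s1\<bar> * norml q1 s1 a"
      using UB[OF assms(2) ia] unfolding E_def by auto
    have fb: "inL q2 s2 (stp b)" and nb: "normL q2 s2 (stp b) \<le> E powr \<bar>s2\<bar> * norml q2 s2 b"
      using UB[OF assms(3) ib] unfolding E_def by auto
    have AEi: "AE x in lebesgue. integrable lebesgue (\<lambda>y. stp a (x - y) * stp b y)"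
      and ic: "inL q s (convR (stp a) (stp b))"
      and nc: "normL q s (convR (stp a) (stp b)) \<le> C * normL q1 s1 (stp a) * normL q2 s2 (stp b)"
      using C fa fb by blast+
    have summ: "\<forall>k. (\<lambda>j. a (k - j) * b j) summable_on UNIV"
      using convZ_bound(1)[OF TT_finite[OF AEi]] by blast
    have mb: "inl q s (convZ a b) \<and>
       norml q s (convZ a b) \<le> (P * P) * E powr \<bar>s\<bar> * normL q s (convR (stp a) (stp b))"
      using main_bound[OF assms(1) AEi ic] unfolding P_def E_def .
    have A0: "0 \<le> normL q1 s1 (stp a)" by (rule normL_nonneg[OF fa])
    have B0: "0 \<le> normL q2 s2 (stp b)" by (rule normL_nonneg[OF fb])
    have a0: "0 \<le> norml q1 s1 a" by (rule norml_nonneg[OF ia])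
    have b0: "0 \<le> norml q2 s2 b" by (rule norml_nonneg[OF ib])
    have C00: "0 \<le> C0" unfolding C0_def by simp
    have "C * normL q1 s1 (stp a) * normL q2 s2 (stp b) \<le> C0 * normL q1 s1 (stp a) * normL q2 s2 (stp b)"
      unfolding C0_def using A0 B0 by (intro mult_right_mono) auto
    also have "\<dots> \<le> C0 * (E powr \<bar>s1\<bar> * norml q1 s1 a) * (E powr \<bar>s2\<bar> * norml q2 s2 b)"
    proof -
      have le1: "C0 * normL q1 s1 (stp a) \<le> C0 * (E powr \<bar>s1\<bar> * norml q1 s1 a)"
        by (rule mult_left_mono[OF na C00])
      have nn1: "0 \<le> C0 * (E powr \<bar>s1\<bar> * norml q1 s1 a)" using C00 a0 by simp
      show ?thesis by (rule mult_mono[OF le1 nb nn1 B0])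
    qed
    finally have ncb: "normL q s (convR (stp a) (stp b)) \<le> C0 * (E powr \<bar>s1\<bar> * norml q1 s1 a) * (E powr \<bar>s2\<bar> * norml q2 s2 b)"
      using nc by linarith
    have PE0: "0 \<le> (P * P) * E powr \<bar>s\<bar>" unfolding P_def by simp
    have "norml q s (convZ a b) \<le> (P * P) * E powr \<bar>s\<bar> * normL q s (convR (stp a) (stp b))"
      using mb by blast
    also have "\<dots> \<le> (P * P) * E powr \<bar>s\<bar> * (C0 * (E powr \<bar>s1\<bar> * norml q1 s1 a) * (E powr \<bar>s2\<bar> * norml q2 s2 b))"
      by (rule mult_left_mono[OF ncb PE0])
    also have "\<dots> = K * norml q1 s1 a * norml q2 s2 b" unfolding K_def by (simp only: mult_ac)
    finally show "(\<forall>k. (\<lambda>j. a (k - j) * b j) summable_on UNIV) \<and> inl q s (convZ a b) \<and>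
        norml q s (convZ a b) \<le> K * norml q1 s1 a * norml q2 s2 b"
      using summ mb by blast
  qed
qed


end
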